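(* Let $M$ be a non-empty subset of $\operatorname{Sym}(n,\mathbb{R})$. The following are equivalent: (i) $M$ is non-dissipative, i.e. $0$ is the only positive semidefinite element of $\operatorname{span}_{\mathbb{R}}M$; (ii) there is a positive definite matrix $Q>0$ such that $\operatorname{tr}({}^tQFQ)=0$ for every $F\in M$; (iii) there is $T\in\operatorname{GL}(n,\mathbb{R})$ such that $\operatorname{tr}({}^tTFT)=0$ for every $F\in M$. *)

theory Defs
  imports "HOL-Analysis.Analysis"
begin

definition sym_mat :: "real^'n^'n \<Rightarrow> bool" where
  "sym_mat A \<longleftrightarrow> transpose A = A"

definition pos_semidef :: "real^'n^'n \<Rightarrow> bool" where
  "pos_semidef A \<longleftrightarrow> sym_mat A \<and> (\<forall>x. 0 \<le> x \<bullet> (A *v x))"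

definition pos_def :: "real^'n^'n \<Rightarrow> bool" where
  "pos_def A \<longleftrightarrow> sym_mat A \<and> (\<forall>x. x \<noteq> 0 \<longrightarrow> 0 < x \<bullet> (A *v x))"

definition non_dissipative :: "(real^'n^'n) set \<Rightarrow> bool" where
  "non_dissipative M \<longleftrightarrow> (\<forall>A\<in>span M. pos_semidef A \<longrightarrow> A = 0)"

end

theory Submission
  imports Defs
begin


lemma quad_zero:
  fixes a b :: real
  assumes "\<forall>t. 0 \<le> 2*t*a + t^2*b"
  shows "a = 0"
proof (rule ccontr)
  assume "a \<noteq> 0"
  define c where "c = \<bar>b\<bar> + 1"
  have p1: "c > 0" unfolding c_def by simp
  have p2: "b - 2*c < 0" unfolding c_def by (cases "b \<ge> 0") auto
  note p = p1 p2
  define t where "t = - a / c"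
  have "0 \<le> 2*t*a + t^2*b" using assms by blast
  also have "2*t*a + t^2*b = (a^2 / c^2) * (b - 2*c)"
    unfolding t_def using p by (simp add: field_simps power2_eq_square)
  also have "\<dots> < 0"
  proof (rule mult_pos_neg)
    show "0 < a\<^sup>2 / c\<^sup>2" using \<open>a \<noteq> 0\<close> p by simp
    show "b - 2 * c < 0" using p by simp
  qed
  finally show False by simp
qed

lemma sym_inner:
  fixes A :: "real^'n^'n"
  assumes "transpose A = A"
  shows "x \<bullet> (A *v y) = y \<bullet> (A *v x)"
proof -
  have "x \<bullet> (A *v y) = (x v* A) \<bullet> y" by (simp add: dot_lmul_matrix)
  also have "x v* A = transpose A *v x" by (simp add: transpose_matrix_vector)
  finally show ?thesis using assms by (simp add: inner_commute)
qed

lemma psd_kernel: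
  fixes A :: "real^'n^'n"
  assumes "transpose A = A" "\<forall>x. 0 \<le> x \<bullet> (A *v x)" "y \<bullet> (A *v y) = 0"
  shows "A *v y = 0"
proof -
  have "\<forall>w. w \<bullet> (A *v y) = 0"
  proof
    fix w
    show "w \<bullet> (A *v y) = 0"
    proof (rule quad_zero[where b = "w \<bullet> (A *v w)"])
      show "\<forall>t. 0 \<le> 2*t*(w \<bullet> (A *v y)) + t^2*(w \<bullet> (A *v w))"
      proof
        fix t :: real
        have "0 \<le> (y + t *\<^sub>R w) \<bullet> (A *v (y + t *\<^sub>R w))" using assms(2) by blast
        also have "\<dots> = y \<bullet> (A *v y) + t * (w \<bullet> (A *v y)) + t * (y \<bullet> (A *v w)) + t^2 * (w \<bullet> (A *v w))"
          by (simp add: matrix_vector_right_distrib matrix_vector_mult_scaleR inner_add_left inner_add_right algebra_simps power2_eq_square)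
        also have "\<dots> = 2*t*(w \<bullet> (A *v y)) + t^2*(w \<bullet> (A *v w))"
          using assms(3) sym_inner[OF assms(1), of y w] by simp
        finally show "0 \<le> 2*t*(w \<bullet> (A *v y)) + t^2*(w \<bullet> (A *v w))" .
      qed
    qed
  qed
  then have "(A *v y) \<bullet> (A *v y) = 0" by blast
  then show ?thesis by simp
qed



lemma eigen_basis_aux:
  fixes A :: "real^'n^'n"
  assumes symA: "transpose A = A"
  shows "\<forall>S. subspace S \<and> (\<forall>x\<in>S. A *v x \<in> S) \<and> dim S = d \<longrightarrow>
    (\<exists>B. B \<subseteq> S \<and> finite B \<and> pairwise orthogonal B \<and> (\<forall>b\<in>B. norm b = 1 \<and> A *v b = (b \<bullet> (A *v b)) *\<^sub>R b) \<and> S \<subseteq> span B)"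
proof (induction d)
  case 0
  then show ?case by (auto simp: dim_eq_0 intro!: exI[of _ "{}"])
next
  case (Suc d)
  show ?case
  proof (intro allI impI, elim conjE)
    fix S :: "(real^'n) set"
    assume sS: "subspace S" and inv: "\<forall>x\<in>S. A *v x \<in> S" and dS: "dim S = Suc d"
    obtain z where "z \<in> S" "z \<noteq> 0" using dS dim_eq_0[of S] by auto
    define K where "K = S \<inter> sphere 0 1"
    have "(1 / norm z) *\<^sub>R z \<in> K" using \<open>z \<in> S\<close> \<open>z \<noteq> 0\<close> sS unfolding K_def
      by (auto simp: subspace_scale)
    then have Kne: "K \<noteq> {}" by blast
    have Kc: "compact K" unfolding K_def
      by (intro closed_Int_compact closed_subspace sS compact_sphere)
    have "continuous_on K (\<lambda>x. x \<bullet> (A *v x))"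
      by (intro continuous_intros matrix_vector_mult_linear_continuous_on)
    then obtain v where vK: "v \<in> K" and vmax: "\<forall>y\<in>K. y \<bullet> (A *v y) \<le> v \<bullet> (A *v v)"
      using continuous_attains_sup[OF Kc Kne] by blast
    define l where "l = v \<bullet> (A *v v)"
    have vS: "v \<in> S" and nv: "norm v = 1" using vK unfolding K_def by auto
    have bound: "x \<bullet> (A *v x) \<le> l * (x \<bullet> x)" if "x \<in> S" for x
    proof (cases "x = 0")
      case True then show ?thesis by simp
    next
      case False
      define y where "y = (1 / norm x) *\<^sub>R x"
      have "y \<in> K" using that False sS unfolding K_def y_def by (auto simp: subspace_scale)
      then have "y \<bullet> (A *v y) \<le> l" using vmax l_def by blast
      moreover have "y \<bullet> (A *v y) = (x \<bullet> (A *v x)) / (x \<bullet> x)"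
        unfolding y_def by (simp add: matrix_vector_mult_scaleR power2_norm_eq_inner[symmetric] power2_eq_square)
      moreover have "x \<bullet> x > 0" using False by simp
      ultimately show ?thesis by (simp add: divide_le_eq)
    qed
    define u where "u = A *v v - l *\<^sub>R v"
    have uS: "u \<in> S" unfolding u_def using inv vS sS by (simp add: subspace_diff subspace_scale)
    have uorth: "w \<bullet> u = 0" if wS: "w \<in> S" for w
    proof -
      have "- (w \<bullet> u) = 0"
      proof (rule quad_zero[where b = "l * (w \<bullet> w) - w \<bullet> (A *v w)"])
        show "\<forall>t. 0 \<le> 2*t*(- (w \<bullet> u)) + t^2*(l * (w \<bullet> w) - w \<bullet> (A *v w))"
        proof
          fix t :: real
          have "v + t *\<^sub>R w \<in> S" using vS wS sS by (simp add: subspace_add subspace_scale)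
          then have "(v + t *\<^sub>R w) \<bullet> (A *v (v + t *\<^sub>R w)) \<le> l * ((v + t *\<^sub>R w) \<bullet> (v + t *\<^sub>R w))"
            by (rule bound)
          moreover have "(v + t *\<^sub>R w) \<bullet> (A *v (v + t *\<^sub>R w)) = l + 2 * t * (w \<bullet> (A *v v)) + t^2 * (w \<bullet> (A *v w))"
            using sym_inner[OF symA, of v w] l_def
            by (simp add: matrix_vector_right_distrib matrix_vector_mult_scaleR inner_add_left inner_add_right algebra_simps power2_eq_square)
          moreover have "(v + t *\<^sub>R w) \<bullet> (v + t *\<^sub>R w) = 1 + 2 * t * (w \<bullet> v) + t^2 * (w \<bullet> w)"
            using nv by (simp add: inner_add_left inner_add_right inner_commute algebra_simps power2_eq_square norm_eq_1)
          ultimately have ineq: "l + 2 * t * (w \<bullet> (A *v v)) + t^2 * (w \<bullet> (A *v w)) \<le> l * (1 + 2 * t * (w \<bullet> v) + t^2 * (w \<bullet> w))"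
            by metis
          moreover have "2*t*(- (w \<bullet> u)) + t^2*(l * (w \<bullet> w) - w \<bullet> (A *v w)) =
             l * (1 + 2 * t * (w \<bullet> v) + t^2 * (w \<bullet> w)) - (l + 2 * t * (w \<bullet> (A *v v)) + t^2 * (w \<bullet> (A *v w)))"
            unfolding u_def by (simp add: inner_diff_right algebra_simps)
          ultimately show "0 \<le> 2*t*(- (w \<bullet> u)) + t^2*(l * (w \<bullet> w) - w \<bullet> (A *v w))"
            by linarith
        qed
      qed
      then show ?thesis by simp
    qed
    have "u \<bullet> u = 0" using uorth[OF uS] .
    then have eig: "A *v v = l *\<^sub>R v" unfolding u_def by simp
    define S' where "S' = {x \<in> S. x \<bullet> v = 0}"
    have sS': "subspace S'" unfolding S'_def subspace_def using sS
      by (auto simp: subspace_add subspace_scale subspace_0 inner_add_left)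
    have inv': "\<forall>x\<in>S'. A *v x \<in> S'"
    proof
      fix x assume "x \<in> S'"
      then have "x \<in> S" "x \<bullet> v = 0" unfolding S'_def by auto
      moreover have "(A *v x) \<bullet> v = x \<bullet> (A *v v)"
        using sym_inner[OF symA, of v x] by (simp add: inner_commute)
      ultimately show "A *v x \<in> S'" unfolding S'_def using inv eig by simp
    qed
    have vnot: "v \<notin> span S'"
    proof
      assume "v \<in> span S'"
      then have "v \<in> S'" using span_eq_iff sS' by blast
      then have "v \<bullet> v = 0" unfolding S'_def by auto
      then show False using nv by simp
    qed
    have span_eq: "span (insert v S') = S"
    proof
      show "span (insert v S') \<subseteq> S"
        using vS sS unfolding S'_def by (intro span_minimal) auto
      show "S \<subseteq> span (insert v S')"
      proof
        fix x assume xS: "x \<in> S"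
        have "x - (x \<bullet> v) *\<^sub>R v \<in> S'" unfolding S'_def using xS vS sS nv
          by (simp add: subspace_diff subspace_scale inner_diff_left norm_eq_1)
        then have "x - (x \<bullet> v) *\<^sub>R v \<in> span (insert v S')" by (simp add: span_base)
        moreover have "(x \<bullet> v) *\<^sub>R v \<in> span (insert v S')" by (simp add: span_base span_scale)
        ultimately have "(x - (x \<bullet> v) *\<^sub>R v) + (x \<bullet> v) *\<^sub>R v \<in> span (insert v S')" by (rule span_add)
        then show "x \<in> span (insert v S')" by simp
      qed
    qed
    have "dim S = dim S' + 1"
      using dim_insert[of v S'] vnot span_eq dim_span[of "insert v S'"] by simp
    then have "dim S' = d" using dS by simp
    then obtain B where B: "B \<subseteq> S'" "finite B" "pairwise orthogonal B"
      "\<forall>b\<in>B. norm b = 1 \<and> A *v b = (b \<bullet> (A *v b)) *\<^sub>R b" "S' \<subseteq> span B"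
      using Suc.IH sS' inv' by blast
    show "\<exists>B. B \<subseteq> S \<and> finite B \<and> pairwise orthogonal B \<and> (\<forall>b\<in>B. norm b = 1 \<and> A *v b = (b \<bullet> (A *v b)) *\<^sub>R b) \<and> S \<subseteq> span B"
    proof (intro exI[of _ "insert v B"] conjI)
      show "insert v B \<subseteq> S" using B(1) vS unfolding S'_def by auto
      show "finite (insert v B)" using B(2) by simp
      show "pairwise orthogonal (insert v B)"
        using B(1,3) unfolding pairwise_insert S'_def orthogonal_def
        by (auto simp: inner_commute)
      show "\<forall>b\<in>insert v B. norm b = 1 \<and> A *v b = (b \<bullet> (A *v b)) *\<^sub>R b"
        using B(4) nv eig l_def by auto
      have "span (insert v S') \<subseteq> span (insert v B)"
      proof (rule span_minimal)
        have "span B \<subseteq> span (insert v B)" by (rule span_mono) auto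
        then show "insert v S' \<subseteq> span (insert v B)" using B(5) by (auto intro: span_base)
      qed (rule subspace_span)
      then show "S \<subseteq> span (insert v B)" using span_eq by simp
    qed
  qed
qed



lemma orthonormal_coeff:
  fixes B :: "('a::real_inner) set"
  assumes "finite B" "pairwise orthogonal B" "\<forall>b\<in>B. norm b = 1" "b \<in> B"
  shows "b \<bullet> (\<Sum>c\<in>B. f c *\<^sub>R c) = f b"
proof -
  have "b \<bullet> (\<Sum>c\<in>B. f c *\<^sub>R c) = (\<Sum>c\<in>B. f c * (b \<bullet> c))"
    by (simp add: inner_sum_right)
  also have "\<dots> = (\<Sum>c\<in>B. if c = b then f c else 0)"
  proof (rule sum.cong)
    fix c assume "c \<in> B"
    show "f c * (b \<bullet> c) = (if c = b then f c else 0)"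
      using assms \<open>c \<in> B\<close> unfolding pairwise_def orthogonal_def
      by (auto simp: norm_eq_1)
  qed simp
  also have "\<dots> = f b" using assms by (simp add: sum.delta')
  finally show ?thesis .
qed

lemma sym_from_inner:
  fixes Q :: "real^'n^'n"
  assumes "\<forall>x y. x \<bullet> (Q *v y) = y \<bullet> (Q *v x)"
  shows "transpose Q = Q"
proof -
  have "transpose Q *v x = Q *v x" for x
  proof -
    have "\<forall>y. (transpose Q *v x - Q *v x) \<bullet> y = 0"
    proof
      fix y
      have "(transpose Q *v x) \<bullet> y = x \<bullet> (Q *v y)"
        by (simp add: dot_lmul_matrix[symmetric] transpose_matrix_vector)
      then show "(transpose Q *v x - Q *v x) \<bullet> y = 0"
        using assms by (simp add: inner_diff_left inner_diff_right inner_commute)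
    qed
    then have "(transpose Q *v x - Q *v x) \<bullet> (transpose Q *v x - Q *v x) = 0" by blast
    then show ?thesis by simp
  qed
  then show ?thesis by (simp add: matrix_eq)
qed

lemma pd_sqrt:
  fixes P :: "real^'n^'n"
  assumes symP: "transpose P = P" and pdP: "\<forall>x. x \<noteq> 0 \<longrightarrow> 0 < x \<bullet> (P *v x)"
  shows "\<exists>Q. transpose Q = Q \<and> (\<forall>x. x \<noteq> 0 \<longrightarrow> 0 < x \<bullet> (Q *v x)) \<and> Q ** Q = P"
proof -
  obtain B where B: "finite B" "pairwise orthogonal B"
      "\<forall>b\<in>B. norm b = 1 \<and> P *v b = (b \<bullet> (P *v b)) *\<^sub>R b" "UNIV \<subseteq> span B"
    using eigen_basis_aux[OF symP, of "dim (UNIV :: (real^'n) set)"] subspace_UNIV by blast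
  have nB: "\<forall>b\<in>B. norm b = 1" using B(3) by blast
  define l where "l b = b \<bullet> (P *v b)" for b
  have lpos: "l b > 0" if "b \<in> B" for b
    using pdP nB that unfolding l_def by (metis norm_zero zero_neq_one)
  have eig: "P *v b = l b *\<^sub>R b" if "b \<in> B" for b using B(3) that unfolding l_def by blast
  have expand: "x = (\<Sum>b\<in>B. (x \<bullet> b) *\<^sub>R b)" for x
  proof -
    have "x \<in> span B" using B(4) by auto
    then show ?thesis using orthonormal_basis_expand[OF B(2) _ _ B(1), of x] nB by auto
  qed
  define q where "q x = (\<Sum>b\<in>B. (sqrt (l b) * (b \<bullet> x)) *\<^sub>R b)" for x
  have lin: "linear q"
    unfolding q_def
    by (rule linearI) (simp_all add: inner_add_right scaleR_add_left sum.distrib scaleR_sum_right algebra_simps)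
  define Q where "Q = matrix q"
  have Qv: "Q *v x = q x" for x unfolding Q_def using lin by (simp add: matrix_vector_mul(2))
  have coef: "b \<bullet> q x = sqrt (l b) * (b \<bullet> x)" if "b \<in> B" for b x
    unfolding q_def using orthonormal_coeff[OF B(1,2) nB that] by simp
  have qq: "q (q x) = P *v x" for x
  proof -
    have "q (q x) = (\<Sum>b\<in>B. (l b * (b \<bullet> x)) *\<^sub>R b)"
      unfolding q_def[of "q x"] using coef lpos
      by (intro sum.cong refl) (simp add: mult.assoc[symmetric] less_imp_le)
    also have "\<dots> = P *v (\<Sum>b\<in>B. (x \<bullet> b) *\<^sub>R b)"
      by (simp add: vec.sum matrix_vector_mult_scaleR eig inner_commute mult.commute)
    finally show ?thesis using expand[of x] by simp
  qed
  have QQ: "Q ** Q = P"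
    unfolding matrix_eq using qq by (simp add: matrix_vector_mul_assoc[symmetric] Qv)
  have qsym: "x \<bullet> q y = y \<bullet> q x" for x y
    unfolding q_def by (simp add: inner_sum_right inner_commute mult.commute mult.left_commute)
  have Qsym: "transpose Q = Q"
    by (rule sym_from_inner) (simp add: Qv qsym)
  have Qpd: "0 < x \<bullet> (Q *v x)" if "x \<noteq> 0" for x
  proof -
    have xq: "x \<bullet> q x = (\<Sum>b\<in>B. sqrt (l b) * (b \<bullet> x)^2)"
      unfolding q_def by (simp add: inner_sum_right inner_commute power2_eq_square mult.assoc)
    obtain b where bB: "b \<in> B" "b \<bullet> x \<noteq> 0"
    proof (rule ccontr)
      assume "\<not> thesis"
      then have "\<forall>b\<in>B. x \<bullet> b = 0" using that by (auto simp: inner_commute)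
      then have "x = 0" using expand[of x] by simp
      then show False using \<open>x \<noteq> 0\<close> by simp
    qed
    have "0 < sqrt (l b) * (b \<bullet> x)^2" using lpos[OF bB(1)] bB(2) by simp
    also have "\<dots> \<le> (\<Sum>b\<in>B. sqrt (l b) * (b \<bullet> x)^2)"
      using B(1) bB(1) lpos by (intro member_le_sum) (auto intro!: mult_nonneg_nonneg simp: less_imp_le)
    finally show ?thesis using xq Qv by simp
  qed
  show ?thesis using QQ Qsym Qpd by blast
qed



lemma trace_form:
  fixes X F :: "real^'n^'n"
  shows "trace (transpose X ** F ** X) = F \<bullet> (X ** transpose X)"
proof -
  have "trace (transpose X ** F ** X) = (\<Sum>i\<in>UNIV. \<Sum>j\<in>UNIV. \<Sum>k\<in>UNIV. X$k$i * F$k$j * X$j$i)"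
    by (simp add: trace_def matrix_matrix_mult_def transpose_def sum_distrib_right)
  also have "\<dots> = (\<Sum>i\<in>UNIV. \<Sum>k\<in>UNIV. \<Sum>j\<in>UNIV. X$k$i * F$k$j * X$j$i)"
    by (rule sum.cong[OF refl], rule sum.swap)
  also have "\<dots> = (\<Sum>k\<in>UNIV. \<Sum>i\<in>UNIV. \<Sum>j\<in>UNIV. X$k$i * F$k$j * X$j$i)"
    by (rule sum.swap)
  also have "\<dots> = (\<Sum>k\<in>UNIV. \<Sum>j\<in>UNIV. \<Sum>i\<in>UNIV. X$k$i * F$k$j * X$j$i)"
    by (rule sum.cong[OF refl], rule sum.swap)
  also have "\<dots> = F \<bullet> (X ** transpose X)"
    by (simp add: inner_vec_def matrix_matrix_mult_def transpose_def sum_distrib_left mult.commute mult.left_commute)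
  finally show ?thesis .
qed

lemma trace_cols:
  fixes X A :: "real^'n^'n"
  shows "trace (transpose X ** A ** X) = (\<Sum>i\<in>UNIV. column i X \<bullet> (A *v column i X))"
proof -
  have "trace (transpose X ** A ** X) = (\<Sum>i\<in>UNIV. \<Sum>j\<in>UNIV. \<Sum>k\<in>UNIV. X$k$i * A$k$j * X$j$i)"
    by (simp add: trace_def matrix_matrix_mult_def transpose_def sum_distrib_right)
  also have "\<dots> = (\<Sum>i\<in>UNIV. \<Sum>k\<in>UNIV. \<Sum>j\<in>UNIV. X$k$i * A$k$j * X$j$i)"
    by (rule sum.cong[OF refl], rule sum.swap)
  also have "\<dots> = (\<Sum>i\<in>UNIV. column i X \<bullet> (A *v column i X))"
    by (simp add: column_def inner_vec_def matrix_vector_mult_def sum_distrib_left mult.assoc)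
  finally show ?thesis .
qed

lemma pd_invertible:
  fixes Q :: "real^'n^'n"
  assumes "pos_def Q"
  shows "invertible Q"
proof -
  have "\<forall>x. Q *v x = 0 \<longrightarrow> x = 0"
    using assms unfolding pos_def_def by (metis inner_zero_right less_irrefl)
  then obtain B where "B ** Q = mat 1" using matrix_left_invertible_ker by blast
  then show ?thesis unfolding invertible_def using matrix_left_right_inverse by blast
qed



definition outer :: "real^'n \<Rightarrow> real^'n^'n" where
  "outer x = (\<chi> i j. x$i * x$j)"

lemma outer_mult: "outer x *v y = (x \<bullet> y) *\<^sub>R x"
  by (simp add: outer_def vec_eq_iff matrix_vector_mult_def inner_vec_def sum_distrib_left mult.commute mult.left_commute)

lemma outer_transpose: "transpose (outer x) = outer x"
  by (simp add: outer_def transpose_def vec_eq_iff mult.commute)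

lemma outer_trace: "trace (outer x) = x \<bullet> x"
  by (simp add: outer_def trace_def inner_vec_def)

lemma inner_outer: "a \<bullet> outer x = x \<bullet> (a *v x)"
  by (simp add: outer_def inner_vec_def matrix_vector_mult_def sum_distrib_left mult.commute mult.left_commute)

lemma inner_transpose: "(F::real^'n^'n) \<bullet> transpose a = transpose F \<bullet> a"
proof -
  have "F \<bullet> transpose a = (\<Sum>i\<in>UNIV. \<Sum>j\<in>UNIV. F$i$j * a$j$i)"
    by (simp add: inner_vec_def transpose_def)
  also have "\<dots> = (\<Sum>j\<in>UNIV. \<Sum>i\<in>UNIV. F$i$j * a$j$i)" by (rule sum.swap)
  also have "\<dots> = transpose F \<bullet> a" by (simp add: inner_vec_def transpose_def)
  finally show ?thesis .
qed

lemma transpose_inner_vec: "y \<bullet> (transpose a *v y) = y \<bullet> ((a::real^'n^'n) *v y)"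
  by (metis dot_lmul_matrix inner_commute transpose_matrix_vector transpose_transpose)

lemma psd_set_convex: "convex {A::real^'n^'n. transpose A = A \<and> (\<forall>y. 0 \<le> y \<bullet> (A *v y)) \<and> trace A = 1}"
proof (rule convexI)
  fix A B :: "real^'n^'n" and u v :: real
  assume A: "A \<in> {A. transpose A = A \<and> (\<forall>y. 0 \<le> y \<bullet> (A *v y)) \<and> trace A = 1}"
    and B: "B \<in> {A. transpose A = A \<and> (\<forall>y. 0 \<le> y \<bullet> (A *v y)) \<and> trace A = 1}"
    and uv1: "0 \<le> u" and uv2: "0 \<le> v" and uv3: "u + v = 1"
  note uv = uv1 uv2 uv3
  have "transpose (u *\<^sub>R A + v *\<^sub>R B) = u *\<^sub>R A + v *\<^sub>R B"
    using A B by (simp add: transpose_def vec_eq_iff)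
  moreover have "0 \<le> y \<bullet> ((u *\<^sub>R A + v *\<^sub>R B) *v y)" for y
  proof -
    have "y \<bullet> ((u *\<^sub>R A + v *\<^sub>R B) *v y) = u * (y \<bullet> (A *v y)) + v * (y \<bullet> (B *v y))"
      by (simp add: matrix_vector_mult_add_rdistrib scaleR_matrix_vector_assoc[symmetric] inner_add_right)
    then show ?thesis using A B uv by simp
  qed
  moreover have "trace (u *\<^sub>R A + v *\<^sub>R B) = 1"
    using A B uv by (simp add: trace_def sum.distrib sum_distrib_left[symmetric])
  ultimately show "u *\<^sub>R A + v *\<^sub>R B \<in> {A. transpose A = A \<and> (\<forall>y. 0 \<le> y \<bullet> (A *v y)) \<and> trace A = 1}"
    by blast
qed


lemma ii_iii:
  fixes M :: "(real^'n^'n) set" and T :: "real^'n^'n"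
  assumes "invertible T" "\<forall>F\<in>M. trace (transpose T ** F ** T) = 0"
  shows "non_dissipative M"
  unfolding non_dissipative_def
proof (intro ballI impI)
  fix A assume AM: "A \<in> span M" and psd: "pos_semidef A"
  have "orthogonal (T ** transpose T) A"
    using AM
  proof (rule orthogonal_to_span)
    fix F assume "F \<in> M"
    then show "orthogonal (T ** transpose T) F"
      using assms(2) trace_form[of T F] unfolding orthogonal_def by (simp add: inner_commute)
  qed
  then have "trace (transpose T ** A ** T) = 0"
    using trace_form[of T A] unfolding orthogonal_def by (simp add: inner_commute)
  then have s0: "(\<Sum>i\<in>UNIV. column i T \<bullet> (A *v column i T)) = 0" using trace_cols by metis
  have nn: "\<forall>i\<in>UNIV. 0 \<le> column i T \<bullet> (A *v column i T)"
    using psd unfolding pos_semidef_def by blast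
  have "\<forall>i. column i T \<bullet> (A *v column i T) = 0"
    using sum_nonneg_eq_0_iff[OF finite, of UNIV "\<lambda>i. column i T \<bullet> (A *v column i T)"] s0 nn by blast
  then have col0: "\<forall>i. A *v column i T = 0"
    using psd psd_kernel unfolding pos_semidef_def sym_mat_def by blast
  have AT: "A ** T = 0"
  proof -
    have "(A ** T) $ j $ i = (A *v column i T) $ j" for i j
      by (simp add: matrix_matrix_mult_def matrix_vector_mult_def column_def)
    then show ?thesis using col0 by (simp add: vec_eq_iff)
  qed
  obtain T' where "T ** T' = mat 1" using assms(1) unfolding invertible_def by blast
  then have "A = (A ** T) ** T'" by (simp add: matrix_mul_assoc[symmetric] matrix_mul_rid)
  then show "A = 0" using AT by (simp add: times0_left)
qed


lemma i_ii:
  fixes M :: "(real^'n^'n) set"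
  assumes symM: "\<forall>F\<in>M. sym_mat F" and nd: "non_dissipative M"
  shows "\<exists>Q. pos_def Q \<and> (\<forall>F\<in>M. trace (transpose Q ** F ** Q) = 0)"
proof -
  define C0 where "C0 = outer ` sphere (0::real^'n) 1"
  define K where "K = convex hull C0"
  define PS where "PS = {A::real^'n^'n. transpose A = A \<and> (\<forall>y. 0 \<le> y \<bullet> (A *v y)) \<and> trace A = 1}"
  have "continuous_on (sphere (0::real^'n) 1) outer"
    unfolding outer_def
    by (intro continuous_on_vec_lambda continuous_intros)
  then have "compact C0" unfolding C0_def by (intro compact_continuous_image compact_sphere)
  then have Kc: "compact K" unfolding K_def by (rule compact_convex_hull)
  have Kcv: "convex K" unfolding K_def by (rule convex_convex_hull)
  obtain i :: 'n where True by blast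
  have "outer (axis i 1) \<in> C0" unfolding C0_def by (intro imageI) simp
  moreover have "C0 \<subseteq> K" unfolding K_def by (rule hull_subset)
  ultimately have Kne: "K \<noteq> {}" by blast
  have "C0 \<subseteq> PS" unfolding C0_def PS_def
    by (auto simp: outer_transpose outer_trace outer_mult norm_eq_1) (metis inner_commute zero_le_square)
  then have KPS: "K \<subseteq> PS" unfolding K_def using psd_set_convex unfolding PS_def
    by (intro hull_minimal) auto
  have disj: "span M \<inter> K = {}"
  proof (rule ccontr)
    assume "span M \<inter> K \<noteq> {}"
    then obtain A where "A \<in> span M" "A \<in> PS" using KPS by blast
    then have "A = 0" using nd unfolding non_dissipative_def pos_semidef_def sym_mat_def PS_def by blast
    then show False using \<open>A \<in> PS\<close> unfolding PS_def by (simp add: trace_def)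
  qed
  obtain a b where ab: "\<forall>x\<in>span M. a \<bullet> x < b" "\<forall>x\<in>K. b < a \<bullet> x"
    using separating_hyperplane_closed_compact[OF subspace_imp_convex[OF subspace_span] closed_subspace[OF subspace_span] Kcv Kc Kne disj] by blast
  have a0: "a \<bullet> x = 0" if "x \<in> span M" for x
  proof (rule ccontr)
    assume ne: "a \<bullet> x \<noteq> 0"
    define t where "t = (\<bar>b\<bar> + 1) / (a \<bullet> x)"
    have "t *\<^sub>R x \<in> span M" using that by (rule span_mul)
    then have "a \<bullet> (t *\<^sub>R x) < b" using ab(1) by blast
    moreover have "a \<bullet> (t *\<^sub>R x) = \<bar>b\<bar> + 1" unfolding t_def using ne by simp
    ultimately show False by linarith
  qed
  have b0: "0 < b" using ab(1) span_zero[of M] by fastforce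
  have apos: "0 < y \<bullet> (a *v y)" if "y \<noteq> 0" for y
  proof -
    define u where "u = (1 / norm y) *\<^sub>R y"
    have "outer u \<in> K" unfolding K_def C0_def u_def using that
      by (intro hull_inc imageI) simp
    then have "b < a \<bullet> outer u" using ab(2) by blast
    then have "0 < a \<bullet> outer u" using b0 by linarith
    then have "0 < u \<bullet> (a *v u)" by (simp add: inner_outer)
    moreover have "u \<bullet> (a *v u) = (1 / norm y)^2 * (y \<bullet> (a *v y))"
      unfolding u_def by (simp add: matrix_vector_mult_scaleR power2_eq_square)
    ultimately show ?thesis using that by (simp add: zero_less_mult_iff)
  qed
  define P where "P = (1/2) *\<^sub>R (a + transpose a)"
  have symP: "transpose P = P" unfolding P_def by (simp add: transpose_def vec_eq_iff add.commute)
  have Pq: "y \<bullet> (P *v y) = y \<bullet> (a *v y)" for y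
    unfolding P_def using transpose_inner_vec[of y a]
    by (simp add: scaleR_matrix_vector_assoc[symmetric] matrix_vector_mult_add_rdistrib inner_add_right)
  have pdP: "\<forall>x. x \<noteq> 0 \<longrightarrow> 0 < x \<bullet> (P *v x)" using apos Pq by simp
  have FP: "F \<bullet> P = 0" if "F \<in> M" for F
  proof -
    have "F \<in> span M" using that by (rule span_base)
    then have "F \<bullet> a = 0" using a0 by (simp add: inner_commute)
    moreover have "F \<bullet> transpose a = 0"
      using inner_transpose[of F a] symM that \<open>F \<bullet> a = 0\<close> unfolding sym_mat_def by simp
    ultimately show ?thesis unfolding P_def by (simp add: inner_add_right)
  qed
  obtain Q where Q: "transpose Q = Q" "\<forall>x. x \<noteq> 0 \<longrightarrow> 0 < x \<bullet> (Q *v x)" "Q ** Q = P"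
    using pd_sqrt[OF symP pdP] by blast
  have "pos_def Q" using Q unfolding pos_def_def sym_mat_def by blast
  moreover have "\<forall>F\<in>M. trace (transpose Q ** F ** Q) = 0"
  proof
    fix F assume "F \<in> M"
    have "trace (transpose Q ** F ** Q) = F \<bullet> (Q ** transpose Q)" by (rule trace_form)
    also have "\<dots> = F \<bullet> P" using Q by simp
    finally show "trace (transpose Q ** F ** Q) = 0" using FP[OF \<open>F \<in> M\<close>] by simp
  qed
  ultimately show ?thesis by blast
qed


theorem lemma2p1:
  fixes M :: "(real^'n^'n) set"
  assumes "M \<noteq> {}" and "\<forall>F\<in>M. sym_mat F"
  shows "(non_dissipative M \<longleftrightarrow>
           (\<exists>Q. pos_def Q \<and> (\<forall>F\<in>M. trace (transpose Q ** F ** Q) = 0)))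
       \<and> ((\<exists>Q. pos_def Q \<and> (\<forall>F\<in>M. trace (transpose Q ** F ** Q) = 0)) \<longleftrightarrow>
           (\<exists>T::real^'n^'n. invertible T \<and> (\<forall>F\<in>M. trace (transpose T ** F ** T) = 0)))"
proof -
  have 1: "non_dissipative M \<Longrightarrow> \<exists>Q. pos_def Q \<and> (\<forall>F\<in>M. trace (transpose Q ** F ** Q) = 0)"
    using i_ii assms(2) by blast
  have 2: "\<exists>Q. pos_def Q \<and> (\<forall>F\<in>M. trace (transpose Q ** F ** Q) = 0) \<Longrightarrow>
      \<exists>T::real^'n^'n. invertible T \<and> (\<forall>F\<in>M. trace (transpose T ** F ** T) = 0)"
    using pd_invertible by blast
  have 3: "\<exists>T::real^'n^'n. invertible T \<and> (\<forall>F\<in>M. trace (transpose T ** F ** T) = 0) \<Longrightarrow>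
      non_dissipative M"
    using ii_iii by blast
  show ?thesis using 1 2 3 by blast
qed

end
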